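(* Let $K\in\{\mathbb R,\mathbb C,\mathbb H\}$ and let $(E,d)$ be a metric vector space over $K$ such that $d$ is $C_0$-translation invariant and $(C_1,C_2,C_3)$-lipschitz multiplicative. Let $d_0(x,y)=\int_{\mathbb U}d(ux,uy)\,d\mu(u)$, $\delta(x,y)=\lim_{n\to\infty}\frac1n d(nx,ny)$ and $\delta_0(x,y)=\lim_{n\to\infty}\frac1n d_0(nx,ny)$. Then $\delta$ and $\delta_0$ are symmetric and satisfy the triangle inequality, and for all $\lambda\in K$ and $x,y\in E$, $\delta_0(\lambda x,\lambda y)=|\lambda|\,\delta_0(x,y)$.
   Context: A metric vector space is a topological vector space over $K$ whose topology is generated by the metric $d$. $\mathbb U=\{u\in K:|u|=1\}$, $\mu$ the right-invariant Haar probability measure on $\mathbb U$. $d$ is $C_0$-translation invariant if $d(x+z,y+z)\le d(x,y)+C_0$ for all $x,y,z$. $(C_1,C_2,C_3)$-lipschitz multiplicative ($C_1\ge1$, $C_2,C_3\ge0$) means $C_1^{-1}|\lambda|d(x,y)-C_2|\lambda|-C_3\le d(\lambda x,\lambda y)\le C_1|\lambda|d(x,y)+C_2|\lambda|+C_3$ for all $\lambda\in K$, $x,y\in E$. (Under these hypotheses the limits defining $\delta,\delta_0$ exist.) *)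

theory Defs
  imports "HOL-Analysis.Analysis" "HOL-Probability.Probability"
begin

text \<open>The scalar field K is modelled as a type of class real_normed_div_algebra
  (an associative unital real algebra with multiplicative norm); up to isometric
  isomorphism these are exactly R, C and H.  |lambda| is norm lambda.\<close>

definition K_module :: "('k::real_normed_div_algebra \<Rightarrow> 'e::ab_group_add \<Rightarrow> 'e) \<Rightarrow> bool" where
  "K_module scal \<longleftrightarrow>
     (\<forall>a x y. scal a (x + y) = scal a x + scal a y) \<and>
     (\<forall>a b x. scal (a + b) x = scal a x + scal b x) \<and>
     (\<forall>a b x. scal (a * b) x = scal a (scal b x)) \<and>
     (\<forall>x. scal 1 x = x)"

definition metric_vector_space ::
  "('k::real_normed_div_algebra \<Rightarrow> 'e::ab_group_add \<Rightarrow> 'e) \<Rightarrow> ('e \<Rightarrow> 'e \<Rightarrow> real) \<Rightarrow> bool" where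
  "metric_vector_space scal d \<longleftrightarrow>
     K_module scal \<and> Metric_space UNIV d \<and>
     (\<forall>x y. \<forall>e>0. \<exists>r>0. \<forall>x' y'. d x x' < r \<and> d y y' < r \<longrightarrow> d (x + y) (x' + y') < e) \<and>
     (\<forall>a x. \<forall>e>0. \<exists>r>0. \<forall>b x'. norm (a - b) < r \<and> d x x' < r \<longrightarrow> d (scal a x) (scal b x') < e)"

definition translation_invariant_C :: "real \<Rightarrow> ('e::ab_group_add \<Rightarrow> 'e \<Rightarrow> real) \<Rightarrow> bool" where
  "translation_invariant_C C0 d \<longleftrightarrow> (\<forall>x y z. d (x + z) (y + z) \<le> d x y + C0)"

definition lipschitz_multiplicative ::
  "real \<Rightarrow> real \<Rightarrow> real \<Rightarrow> ('k::real_normed_div_algebra \<Rightarrow> 'e \<Rightarrow> 'e) \<Rightarrow> ('e \<Rightarrow> 'e \<Rightarrow> real) \<Rightarrow> bool" where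
  "lipschitz_multiplicative C1 C2 C3 scal d \<longleftrightarrow>
     C1 \<ge> 1 \<and> C2 \<ge> 0 \<and> C3 \<ge> 0 \<and>
     (\<forall>c x y.
        norm c * d x y / C1 - C2 * norm c - C3 \<le> d (scal c x) (scal c y) \<and>
        d (scal c x) (scal c y) \<le> C1 * norm c * d x y + C2 * norm c + C3)"

definition unit_group :: "'k::real_normed_div_algebra set" where
  "unit_group = {u. norm u = 1}"

definition haar_prob_U :: "'k::real_normed_div_algebra measure \<Rightarrow> bool" where
  "haar_prob_U M \<longleftrightarrow>
     prob_space M \<and> space M = unit_group \<and> sets M = sets (restrict_space borel unit_group) \<and>
     (\<forall>v\<in>unit_group. \<forall>A\<in>sets M. emeasure M {u\<in>unit_group. u * v \<in> A} = emeasure M A)"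

definition d0 :: "'k::real_normed_div_algebra measure \<Rightarrow> ('k \<Rightarrow> 'e \<Rightarrow> 'e) \<Rightarrow> ('e \<Rightarrow> 'e \<Rightarrow> real) \<Rightarrow> 'e \<Rightarrow> 'e \<Rightarrow> real" where
  "d0 M scal d x y = (\<integral>u. d (scal u x) (scal u y) \<partial>M)"

definition asym :: "('k::real_normed_div_algebra \<Rightarrow> 'e \<Rightarrow> 'e) \<Rightarrow> ('e \<Rightarrow> 'e \<Rightarrow> real) \<Rightarrow> 'e \<Rightarrow> 'e \<Rightarrow> real" where
  "asym scal d x y = lim (\<lambda>n. d (scal (of_nat n) x) (scal (of_nat n) y) / real n)"

end

theory Submission
  imports Defs
begin

lemma sub_mult:
  fixes G :: "real \<Rightarrow> real"
  assumes sub: "\<And>a b. a \<ge> 0 \<Longrightarrow> b \<ge> 0 \<Longrightarrow> G (a + b) \<le> G a + G b"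
    and s: "s \<ge> 0" and n: "n \<ge> 1"
  shows "G (real n * s) \<le> real n * G s"
  using n
proof (induction n rule: nat_induct_at_least)
  case base then show ?case by simp
next
  case (Suc n)
  have "G (real (Suc n) * s) = G (real n * s + s)" by (simp add: algebra_simps)
  also have "\<dots> \<le> G (real n * s) + G s" using sub s by simp
  also have "\<dots> \<le> real n * G s + G s" using Suc by simp
  finally show ?case by (simp add: algebra_simps)
qed

lemma fekete_real:
  fixes G :: "real \<Rightarrow> real"
  assumes sub: "\<And>a b. a \<ge> 0 \<Longrightarrow> b \<ge> 0 \<Longrightarrow> G (a + b) \<le> G a + G b"
    and nn: "\<And>t. t \<ge> 0 \<Longrightarrow> G t \<ge> 0"
    and bd: "\<And>t. 0 \<le> t \<Longrightarrow> t \<le> 1 \<Longrightarrow> G t \<le> B"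
  shows "\<exists>L. ((\<lambda>t. G t / t) \<longlongrightarrow> L) at_top"
proof -
  define S where "S = (\<lambda>t. G t / t) ` {1..}"
  define L where "L = Inf S"
  have Sne: "S \<noteq> {}" unfolding S_def by auto
  have Sbdd: "bdd_below S"
  proof (rule bdd_belowI[of _ 0])
    fix v assume "v \<in> S"
    then obtain t where t: "t \<ge> 1" "v = G t / t" unfolding S_def by auto
    then show "0 \<le> v" using nn[of t] by simp
  qed
  have lower: "G t / t \<ge> L" if "t \<ge> 1" for t
    unfolding L_def using Sbdd that by (intro cInf_lower) (auto simp: S_def)
  have B0: "B \<ge> 0" using bd[of 0] nn[of 0] by simp
  have "\<forall>\<^sub>F t in at_top. dist (G t / t) L < e" if e: "e > 0" for e
  proof -
    have "L < L + e/2" using e by simp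
    then obtain v where "v \<in> S" "v < L + e/2" using cInf_lessD[OF Sne] unfolding L_def by blast
    then obtain m where m1: "m \<ge> 1" and mL: "G m / m < L + e/2" unfolding S_def by auto
    define k where "k = nat \<lceil>m\<rceil>"
    have k1: "k \<ge> 1" and km: "real k \<ge> m" using m1 unfolding k_def by linarith+
    have rb: "G r \<le> real k * B" if "0 \<le> r" "r \<le> m" for r
    proof -
      have "G r = G (real k * (r / real k))" using k1 by simp
      also have "\<dots> \<le> real k * G (r / real k)"
        by (rule sub_mult[OF sub]) (use that k1 in auto)
      also have "\<dots> \<le> real k * B"
        using bd[of "r / real k"] that km k1 by (intro mult_left_mono) (auto simp: field_simps)
      finally show ?thesis .
    qed
    have "\<forall>\<^sub>F t in at_top. t \<ge> max m (2 * real k * B / e + 1)" by (rule eventually_ge_at_top)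
    then show ?thesis
    proof eventually_elim
      case (elim t)
      have tm: "t \<ge> m" and tB: "t > 2 * real k * B / e" using elim by auto
      have t1: "t \<ge> 1" using tm m1 by simp
      define q where "q = nat \<lfloor>t / m\<rfloor>"
      have "t / m \<ge> 1" using tm m1 by simp
      then have q1: "q \<ge> 1" unfolding q_def by linarith
      have qle: "real q \<le> t / m" unfolding q_def using \<open>t / m \<ge> 1\<close> by linarith
      have qgt: "t / m < real q + 1" unfolding q_def using \<open>t / m \<ge> 1\<close> by linarith
      define r where "r = t - real q * m"
      have r0: "r \<ge> 0" using qle m1 unfolding r_def by (simp add: field_simps)
      have rm: "r \<le> m" using qgt m1 unfolding r_def by (simp add: field_simps)
      have "G t = G (real q * m + r)" unfolding r_def by simp
      also have "\<dots> \<le> G (real q * m) + G r" using sub r0 m1 by simp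
      also have "\<dots> \<le> real q * G m + real k * B"
        using sub_mult[OF sub, of m q] m1 q1 rb[OF r0 rm] by simp
      finally have Gt: "G t \<le> real q * G m + real k * B" .
      have "real q * G m \<le> (t / m) * G m" using qle nn[of m] m1 by (intro mult_right_mono) auto
      then have "real q * G m / t \<le> G m / m" using t1 by (simp add: field_simps)
      moreover have "real k * B / t < e / 2" using tB e t1 by (simp add: field_simps)
      moreover have "G t / t \<le> (real q * G m + real k * B) / t"
        using Gt t1 by (intro divide_right_mono) auto
      moreover have "(real q * G m + real k * B) / t = real q * G m / t + real k * B / t"
        by (rule add_divide_distrib)
      ultimately have "G t / t < L + e" using mL by linarith
      moreover have "G t / t \<ge> L" using lower t1 .
      ultimately show ?case by (simp add: dist_real_def)
    qed
  qed
  then have "((\<lambda>t. G t / t) \<longlongrightarrow> L) at_top" by (rule tendstoI)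
  then show ?thesis by blast
qed


lemma module_facts:
  assumes "K_module scal"
  shows "scal a 0 = 0" "scal a (x - y) = scal a x - scal a y" "scal 0 x = 0"
    "scal (a + b) x = scal a x + scal b x" "scal (a * b) x = scal a (scal b x)"
    "scal a (x + y) = scal a x + scal a y"
proof -
  have add: "\<And>a x y. scal a (x + y) = scal a x + scal a y"
    and add2: "\<And>a b x. scal (a + b) x = scal a x + scal b x"
    and mul: "\<And>a b x. scal (a * b) x = scal a (scal b x)"
    using assms unfolding K_module_def by auto
  have "scal a (0 + 0) = scal a 0 + scal a 0" by (rule add)
  then show z: "scal a 0 = 0" by simp
  have "scal a (y + - y) = scal a y + scal a (- y)" by (rule add)
  then have "scal a y + scal a (- y) = 0" using z by simp
  then have "- scal a y = scal a (- y)" by (rule minus_unique)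
  then have "scal a (- y) = - scal a y" by simp
  then show "scal a (x - y) = scal a x - scal a y" using add[of a x "- y"] by simp
  have "scal (0 + 0) x = scal 0 x + scal 0 x" by (rule add2)
  then show "scal 0 x = 0" by simp
  show "scal (a + b) x = scal a x + scal b x" by (rule add2)
  show "scal (a * b) x = scal a (scal b x)" by (rule mul)
  show "scal a (x + y) = scal a x + scal a y" by (rule add)
qed

lemma asym_gen:
  fixes scal :: "'k::real_normed_div_algebra \<Rightarrow> 'e::ab_group_add \<Rightarrow> 'e"
    and D :: "'e \<Rightarrow> 'e \<Rightarrow> real"
  assumes km: "K_module scal"
    and nn: "\<And>x y. D x y \<ge> 0"
    and tri: "\<And>x y z. D x z \<le> D x y + D y z"
    and tr: "\<And>x y z. D (x + z) (y + z) \<le> D x y + C0"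
    and bd: "\<And>z. \<exists>B. \<forall>s::real. 0 \<le> s \<longrightarrow> s \<le> 1 \<longrightarrow> D (scal (of_real s) z) 0 \<le> B"
  shows "((\<lambda>t. D (scal (of_real t) x) (scal (of_real t) y) / t) \<longlongrightarrow> asym scal D x y) at_top"
proof -
  note mf = module_facts[OF km]
  have C0: "C0 \<ge> 0" using tr[of 0 0 0] by simp
  define z where "z = x - y"
  define G where "G t = D (scal (of_real t) z) 0 + C0" for t :: real
  have sub: "G (a + b) \<le> G a + G b" if "a \<ge> 0" "b \<ge> 0" for a b
  proof -
    define A where "A = scal (of_real a) z"
    define Bv where "Bv = scal (of_real b) z"
    have "scal (of_real (a + b)) z = A + Bv" unfolding A_def Bv_def by (simp add: mf)
    moreover have "D (A + Bv) 0 \<le> D (A + Bv) Bv + D Bv 0" by (rule tri)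
    moreover have "D (A + Bv) (0 + Bv) \<le> D A 0 + C0" by (rule tr)
    ultimately show ?thesis unfolding G_def A_def Bv_def by simp
  qed
  obtain B where B: "\<And>s::real. 0 \<le> s \<Longrightarrow> s \<le> 1 \<Longrightarrow> D (scal (of_real s) z) 0 \<le> B" using bd[of z] by blast
  have "\<exists>L. ((\<lambda>t. G t / t) \<longlongrightarrow> L) at_top"
  proof (rule fekete_real[of G "B + C0"])
    fix a b :: real assume "a \<ge> 0" "b \<ge> 0" then show "G (a + b) \<le> G a + G b" by (rule sub)
  next
    fix t :: real
    show "G t \<ge> 0" unfolding G_def using nn[of "scal (of_real t) z" 0] C0 by linarith
  next
    fix t :: real assume "0 \<le> t" "t \<le> 1"
    then show "G t \<le> B + C0" unfolding G_def using B[of t] by linarith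
  qed
  then obtain L where L: "((\<lambda>t. G t / t) \<longlongrightarrow> L) at_top" by blast
  define h where "h t = D (scal (of_real t) x) (scal (of_real t) y)" for t :: real
  have up: "h t \<le> G t" for t
  proof -
    have "scal (of_real t) x = scal (of_real t) z + scal (of_real t) y" unfolding z_def by (simp add: mf)
    then have "h t = D (scal (of_real t) z + scal (of_real t) y) (0 + scal (of_real t) y)" unfolding h_def by simp
    also have "\<dots> \<le> D (scal (of_real t) z) 0 + C0" by (rule tr)
    finally show ?thesis unfolding G_def .
  qed
  have lo: "G t - 2 * C0 \<le> h t" for t
  proof -
    have "scal (of_real t) z = scal (of_real t) x + - scal (of_real t) y" unfolding z_def by (simp add: mf)
    then have "D (scal (of_real t) z) 0 = D (scal (of_real t) x + - scal (of_real t) y) (scal (of_real t) y + - scal (of_real t) y)" by simp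
    also have "\<dots> \<le> h t + C0" unfolding h_def by (rule tr)
    finally show ?thesis unfolding G_def by simp
  qed
  have z0: "((\<lambda>t. 2 * C0 / t) \<longlongrightarrow> 0) at_top"
    by (rule tendsto_divide_0[OF tendsto_const filterlim_at_top_imp_at_infinity[OF filterlim_ident]])
  have l1: "((\<lambda>t. G t / t - 2 * C0 / t) \<longlongrightarrow> L) at_top"
    using tendsto_diff[OF L z0] by simp
  have ev: "\<forall>\<^sub>F t in at_top. G t / t - 2 * C0 / t \<le> h t / t \<and> h t / t \<le> G t / t"
    using eventually_gt_at_top[of 0]
  proof eventually_elim
    case (elim t)
    have "(G t - 2 * C0) / t \<le> h t / t" using elim lo[of t] by (intro divide_right_mono) auto
    moreover have "h t / t \<le> G t / t" using elim up[of t] by (intro divide_right_mono) auto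
    moreover have "(G t - 2 * C0) / t = G t / t - 2 * C0 / t" by (rule diff_divide_distrib)
    ultimately show ?case by simp
  qed
  have hL: "((\<lambda>t. h t / t) \<longlongrightarrow> L) at_top"
  proof (rule tendsto_sandwich[OF _ _ l1 L])
    show "\<forall>\<^sub>F t in at_top. G t / t - 2 * C0 / t \<le> h t / t" using ev by (rule eventually_mono) simp
    show "\<forall>\<^sub>F t in at_top. h t / t \<le> G t / t" using ev by (rule eventually_mono) simp
  qed
  have "(\<lambda>n. h (real n) / real n) \<longlonglongrightarrow> L"
    using filterlim_compose[OF hL filterlim_real_sequentially] by (simp add: o_def)
  then have "asym scal D x y = L" unfolding asym_def h_def by (simp add: of_real_of_nat_eq limI)
  with hL show ?thesis unfolding h_def by simp
qed


lemma of_real_comm: "of_real a * b = b * (of_real a :: 'k::real_normed_algebra_1)"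
  by (simp add: of_real_def)

theorem proposition2:
  fixes scal :: "'k::real_normed_div_algebra \<Rightarrow> 'e::ab_group_add \<Rightarrow> 'e"
    and d :: "'e \<Rightarrow> 'e \<Rightarrow> real"
    and M :: "'k measure"
    and C0 C1 C2 C3 :: real
  assumes "metric_vector_space scal d"
    and "translation_invariant_C C0 d"
    and "lipschitz_multiplicative C1 C2 C3 scal d"
    and "haar_prob_U M"
  shows "(\<forall>x y. asym scal d x y = asym scal d y x) \<and>
         (\<forall>x y z. asym scal d x z \<le> asym scal d x y + asym scal d y z) \<and>
         (\<forall>x y. asym scal (d0 M scal d) x y = asym scal (d0 M scal d) y x) \<and>
         (\<forall>x y z. asym scal (d0 M scal d) x z \<le> asym scal (d0 M scal d) x y + asym scal (d0 M scal d) y z) \<and>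
         (\<forall>c x y. asym scal (d0 M scal d) (scal c x) (scal c y) = norm c * asym scal (d0 M scal d) x y)"
proof -
  have mvs: "K_module scal \<and> Metric_space UNIV d \<and>
     (\<forall>x y. \<forall>e>0. \<exists>r>0. \<forall>x' y'. d x x' < r \<and> d y y' < r \<longrightarrow> d (x + y) (x' + y') < e) \<and>
     (\<forall>a x. \<forall>e>0. \<exists>r>0. \<forall>b x'. norm (a - b) < r \<and> d x x' < r \<longrightarrow> d (scal a x) (scal b x') < e)"
    using assms(1) unfolding metric_vector_space_def .
  have km: "K_module scal" using mvs by (elim conjE)
  have ms: "Metric_space UNIV d" using mvs by (elim conjE)
  have cont: "\<And>a x e. e > 0 \<Longrightarrow> \<exists>r>0. \<forall>b x'. norm (a - b) < r \<and> d x x' < r \<longrightarrow> d (scal a x) (scal b x') < e"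
    using mvs by (elim conjE) (simp only: all_simps)
  note mf = module_facts[OF km]
  have dnn: "\<And>x y. d x y \<ge> 0" by (rule Metric_space.nonneg[OF ms])
  have dcom: "\<And>x y. d x y = d y x" by (rule Metric_space.commute[OF ms])
  have dtri: "\<And>x y z. d x z \<le> d x y + d y z" by (rule Metric_space.triangle[OF ms]) auto
  have dxx: "\<And>x. d x x = 0" using Metric_space.zero[OF ms] by simp
  have tr: "\<And>x y z. d (x + z) (y + z) \<le> d x y + C0"
    using assms(2) unfolding translation_invariant_C_def by blast
  have lm: "C1 \<ge> 1 \<and> C2 \<ge> 0 \<and> C3 \<ge> 0 \<and>
     (\<forall>c x y.
        norm c * d x y / C1 - C2 * norm c - C3 \<le> d (scal c x) (scal c y) \<and>
        d (scal c x) (scal c y) \<le> C1 * norm c * d x y + C2 * norm c + C3)"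
    using assms(3) unfolding lipschitz_multiplicative_def .
  have C1: "C1 \<ge> 1" using lm[THEN conjunct1] .
  have C2: "C2 \<ge> 0" using lm[THEN conjunct2, THEN conjunct1] .
  have C3: "C3 \<ge> 0" using lm[THEN conjunct2, THEN conjunct2, THEN conjunct1] .
  have lip: "\<And>c x y. d (scal c x) (scal c y) \<le> C1 * norm c * d x y + C2 * norm c + C3"
    using lm[THEN conjunct2, THEN conjunct2, THEN conjunct2] by (simp only: all_simps)
  have hp: "prob_space M \<and> space M = unit_group \<and> sets M = sets (restrict_space borel unit_group) \<and>
     (\<forall>v\<in>unit_group. \<forall>A\<in>sets M. emeasure M {u\<in>unit_group. u * v \<in> A} = emeasure M A)"
    using assms(4) unfolding haar_prob_U_def .
  have ps: "prob_space M" using hp[THEN conjunct1] .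
  have spM: "space M = unit_group" using hp[THEN conjunct2, THEN conjunct1] .
  have setsM: "sets M = sets (restrict_space borel unit_group)" using hp[THEN conjunct2, THEN conjunct2, THEN conjunct1] .
  have inv: "\<And>v A. v \<in> unit_group \<Longrightarrow> A \<in> sets M \<Longrightarrow> emeasure M {u\<in>unit_group. u * v \<in> A} = emeasure M A"
    using hp[THEN conjunct2, THEN conjunct2, THEN conjunct2] by (simp only: Ball_def)
  have lipb: "d (scal c x) (scal c y) \<le> C1 * d x y + C2 + C3" if "norm c \<le> 1" for c x y
  proof -
    have "norm c * d x y \<le> d x y" using that dnn[of x y] by (simp add: mult_left_le_one_le)
    then have "C1 * (norm c * d x y) \<le> C1 * d x y" using C1 by (intro mult_left_mono) auto
    moreover have "C2 * norm c \<le> C2" using C2 that by (simp add: mult_left_le)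
    ultimately show ?thesis using lip[of c x y] by (simp add: mult.assoc)
  qed
  have contf: "continuous_on UNIV (\<lambda>u. d (scal u x) (scal u y))" for x y
  proof (intro continuous_at_imp_continuous_on ballI)
    fix a :: 'k
    show "isCont (\<lambda>u. d (scal u x) (scal u y)) a"
      unfolding continuous_at_eps_delta
    proof (intro allI impI)
      fix e :: real assume e: "e > 0"
      obtain r1 where r1: "r1 > 0" "\<And>b. norm (a - b) < r1 \<Longrightarrow> d (scal a x) (scal b x) < e/2"
        using cont[of "e/2" a x] e dxx by fastforce
      obtain r2 where r2: "r2 > 0" "\<And>b. norm (a - b) < r2 \<Longrightarrow> d (scal a y) (scal b y) < e/2"
        using cont[of "e/2" a y] e dxx by fastforce
      show "\<exists>r>0. \<forall>b. dist b a < r \<longrightarrow> dist (d (scal b x) (scal b y)) (d (scal a x) (scal a y)) < e"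
      proof (intro exI[of _ "min r1 r2"] conjI allI impI)
        show "min r1 r2 > 0" using r1 r2 by simp
        fix b assume "dist b a < min r1 r2"
        then have n: "norm (a - b) < r1" "norm (a - b) < r2" by (auto simp: dist_norm norm_minus_commute)
        have A: "d (scal a x) (scal b x) < e/2" "d (scal a y) (scal b y) < e/2" using r1(2) r2(2) n by auto
        have "d (scal b x) (scal b y) \<le> d (scal b x) (scal a x) + d (scal a x) (scal b y)" by (rule dtri)
        moreover have "d (scal a x) (scal b y) \<le> d (scal a x) (scal a y) + d (scal a y) (scal b y)" by (rule dtri)
        moreover have "d (scal a x) (scal a y) \<le> d (scal a x) (scal b x) + d (scal b x) (scal a y)" by (rule dtri)
        moreover have "d (scal b x) (scal a y) \<le> d (scal b x) (scal b y) + d (scal b y) (scal a y)" by (rule dtri)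
        ultimately show "dist (d (scal b x) (scal b y)) (d (scal a x) (scal a y)) < e"
          using A dcom[of "scal b x" "scal a x"] dcom[of "scal b y" "scal a y"]
          by (simp add: dist_real_def abs_less_iff)
      qed
    qed
  qed
  have measU: "f \<in> borel_measurable M" if "continuous_on UNIV f" for f :: "'k \<Rightarrow> real"
  proof -
    have eq: "borel_measurable M = borel_measurable (restrict_space borel unit_group)"
      by (rule measurable_cong_sets[OF setsM refl])
    show ?thesis unfolding eq
      by (rule measurable_restrict_space1[OF borel_measurable_continuous_onI[OF that]])
  qed
  have meas: "(\<lambda>u. d (scal u x) (scal u y)) \<in> borel_measurable M" for x y
    by (rule measU[OF contf])
  have integ: "integrable M (\<lambda>u. d (scal u x) (scal u y))" for x y
  proof -
    interpret prob_space M by (rule ps)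
    show ?thesis
    proof (rule integrable_const_bound[where B = "C1 * d x y + C2 + C3"])
      show "AE u in M. norm (d (scal u x) (scal u y)) \<le> C1 * d x y + C2 + C3"
        using lipb dnn spM by (auto simp: unit_group_def intro!: AE_I2)
    qed (rule meas)
  qed
  have intc: "integral\<^sup>L M (\<lambda>_. a) = a" for a :: real
    using prob_space.prob_space[OF ps] by simp
  have fm: "finite_measure M" using ps by (simp add: prob_space_def)
  define D0 where "D0 = d0 M scal d"
  have D0nn: "D0 x y \<ge> 0" for x y unfolding D0_def d0_def by (rule Bochner_Integration.integral_nonneg) (simp add: dnn)
  have D0com: "D0 x y = D0 y x" for x y unfolding D0_def d0_def by (simp add: dcom)
  have D0xx: "D0 x x = 0" for x unfolding D0_def d0_def by (simp add: dxx)
  have D0tri: "D0 x z \<le> D0 x y + D0 y z" for x y z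
  proof -
    have "D0 x z \<le> integral\<^sup>L M (\<lambda>u. d (scal u x) (scal u y) + d (scal u y) (scal u z))"
      unfolding D0_def d0_def by (rule Bochner_Integration.integral_mono) (auto intro: integ dtri)
    also have "\<dots> = D0 x y + D0 y z" unfolding D0_def d0_def by (rule Bochner_Integration.integral_add) (rule integ)+
    finally show ?thesis .
  qed
  have D0tr: "D0 (x + z) (y + z) \<le> D0 x y + C0" for x y z
  proof -
    have "D0 (x + z) (y + z) \<le> integral\<^sup>L M (\<lambda>u. d (scal u x) (scal u y) + C0)"
      unfolding D0_def d0_def
      by (rule Bochner_Integration.integral_mono[OF integ Bochner_Integration.integrable_add[OF integ finite_measure.integrable_const[OF fm]]])
        (simp add: mf tr)
    also have "\<dots> = D0 x y + C0" unfolding D0_def d0_def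
      by (subst Bochner_Integration.integral_add[OF integ finite_measure.integrable_const[OF fm]]) (simp add: intc prob_space.prob_space[OF ps])
    finally show ?thesis .
  qed
  have dbd: "\<exists>B. \<forall>s::real. 0 \<le> s \<longrightarrow> s \<le> 1 \<longrightarrow> d (scal (of_real s) z) 0 \<le> B" for z
  proof (intro exI allI impI)
    fix s :: real assume "0 \<le> s" "s \<le> 1"
    then have "d (scal (of_real s) z) (scal (of_real s) 0) \<le> C1 * d z 0 + C2 + C3" by (intro lipb) auto
    then show "d (scal (of_real s) z) 0 \<le> C1 * d z 0 + C2 + C3" by (simp add: mf)
  qed
  have D0bd: "\<exists>B. \<forall>s::real. 0 \<le> s \<longrightarrow> s \<le> 1 \<longrightarrow> D0 (scal (of_real s) z) 0 \<le> B" for z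
  proof (intro exI allI impI)
    fix s :: real assume s: "0 \<le> s" "s \<le> 1"
    have "D0 (scal (of_real s) z) 0 \<le> integral\<^sup>L M (\<lambda>u. C1 * d z 0 + C2 + C3)"
      unfolding D0_def d0_def
    proof (rule Bochner_Integration.integral_mono)
      fix u assume "u \<in> space M"
      then have "norm u = 1" using spM by (simp add: unit_group_def)
      then have "norm (u * of_real s) \<le> 1" using s by (simp add: norm_mult)
      then have "d (scal (u * of_real s) z) (scal (u * of_real s) 0) \<le> C1 * d z 0 + C2 + C3" by (rule lipb)
      then show "d (scal u (scal (of_real s) z)) (scal u 0) \<le> C1 * d z 0 + C2 + C3" by (simp add: mf)
    qed (auto intro: integ finite_measure.integrable_const[OF fm])
    then show "D0 (scal (of_real s) z) 0 \<le> C1 * d z 0 + C2 + C3" by (simp add: intc prob_space.prob_space[OF ps])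
  qed
  have gd: "((\<lambda>t. d (scal (of_real t) x) (scal (of_real t) y) / t) \<longlongrightarrow> asym scal d x y) at_top" for x y
    by (rule asym_gen[OF km dnn dtri tr dbd])
  have gD0: "((\<lambda>t. D0 (scal (of_real t) x) (scal (of_real t) y) / t) \<longlongrightarrow> asym scal D0 x y) at_top" for x y
    by (rule asym_gen[OF km D0nn D0tri D0tr D0bd])
  have trig: "asym scal D x z \<le> asym scal D x y + asym scal D y z"
    if g: "\<And>x y. ((\<lambda>t. D (scal (of_real t) x) (scal (of_real t) y) / t) \<longlongrightarrow> asym scal D x y) at_top"
    and t: "\<And>x y z. D x z \<le> D x y + D y z" for D :: "'e \<Rightarrow> 'e \<Rightarrow> real" and x y z
  proof (rule tendsto_le[OF trivial_limit_at_top_linorder tendsto_add[OF g g] g])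
    show "\<forall>\<^sub>F t in at_top. D (scal (of_real t) x) (scal (of_real t) z) / t \<le>
      D (scal (of_real t) x) (scal (of_real t) y) / t + D (scal (of_real t) y) (scal (of_real t) z) / t"
      using eventually_gt_at_top[of 0]
      by eventually_elim (simp add: add_divide_distrib[symmetric] divide_right_mono t)
  qed
  have symg: "asym scal D x y = asym scal D y x" if "\<And>x y. D x y = D y x" for D :: "'e \<Rightarrow> 'e \<Rightarrow> real" and x y
    unfolding asym_def using that by simp
  have hom: "asym scal D0 (scal c x) (scal c y) = norm c * asym scal D0 x y" for c x y
  proof (cases "c = 0")
    case True
    have "asym scal D0 0 0 = 0" unfolding asym_def by (simp add: D0xx)
    then show ?thesis using True by (simp add: mf)
  next
    case False
    define r where "r = norm c"
    have r: "r > 0" using False by (simp add: r_def)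
    define u0 where "u0 = (of_real (1 / r) :: 'k) * c"
    have "norm u0 = \<bar>1/r\<bar> * r" by (simp add: u0_def norm_mult r_def del: of_real_divide)
    then have u0U: "u0 \<in> unit_group" using r by (simp add: unit_group_def)
    have "u0 * of_real r = of_real (1/r) * (c * of_real r)" unfolding u0_def by (rule mult.assoc)
    also have "\<dots> = (of_real (1/r) * of_real r) * c" by (simp only: of_real_comm[of r c, symmetric] mult.assoc)
    also have "\<dots> = of_real (1/r * r) * c" by (simp only: of_real_mult)
    also have "\<dots> = c" using r by simp
    finally have cu: "c = u0 * of_real r" by simp
    define H where "H t = D0 (scal (of_real t) x) (scal (of_real t) y)" for t :: real
    have invint: "integral\<^sup>L M (\<lambda>u. f (u * v)) = integral\<^sup>L M f"
      if v: "v \<in> unit_group" and f: "f \<in> borel_measurable M" for f :: "'k \<Rightarrow> real" and v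
    proof -
      have gm: "(\<lambda>u. u * v) \<in> measurable M M"
      proof -
        have "(\<lambda>u. u * v) \<in> measurable (restrict_space borel unit_group) (restrict_space borel unit_group)"
          using v
          by (intro measurable_restrict_space1 measurable_restrict_space2 borel_measurable_continuous_onI)
             (auto simp: unit_group_def norm_mult intro!: continuous_intros)
        moreover have "M \<rightarrow>\<^sub>M M = restrict_space borel unit_group \<rightarrow>\<^sub>M restrict_space borel unit_group"
          by (rule measurable_cong_sets[OF setsM setsM])
        ultimately show ?thesis by (simp only:)
      qed
      have "distr M M (\<lambda>u. u * v) = M"
      proof (rule measure_eqI)
        fix A assume A: "A \<in> sets (distr M M (\<lambda>u. u * v))"
        then have A': "A \<in> sets M" by simp
        have "emeasure (distr M M (\<lambda>u. u * v)) A = emeasure M ((\<lambda>u. u * v) -` A \<inter> space M)"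
          by (rule emeasure_distr[OF gm A'])
        also have "(\<lambda>u. u * v) -` A \<inter> space M = {u\<in>unit_group. u * v \<in> A}" using spM by auto
        also have "emeasure M \<dots> = emeasure M A" by (rule inv[OF v A'])
        finally show "emeasure (distr M M (\<lambda>u. u * v)) A = emeasure M A" .
      qed simp
      then have "integral\<^sup>L M f = integral\<^sup>L (distr M M (\<lambda>u. u * v)) f" by simp
      also have "\<dots> = integral\<^sup>L M (\<lambda>u. f (u * v))" by (rule integral_distr[OF gm f])
      finally show ?thesis by simp
    qed
    have eq: "D0 (scal (of_nat n) (scal c x)) (scal (of_nat n) (scal c y)) = H (real n * r)" for n
    proof -
      define t where "t = (of_real (real n * r) :: 'k)"
      have nc: "of_nat n * c = u0 * t"
      proof -
        have "of_nat n * c = (of_real (real n) * u0) * of_real r" unfolding cu of_real_of_nat_eq by (rule mult.assoc[symmetric])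
        also have "\<dots> = (u0 * of_real (real n)) * of_real r" by (simp only: of_real_comm)
        also have "\<dots> = u0 * t" unfolding t_def of_real_mult by (rule mult.assoc)
        finally show ?thesis .
      qed
      have uu: "u * (of_nat n * c) = (u * u0) * t" for u
        unfolding nc by (rule mult.assoc[symmetric])
      have "D0 (scal (of_nat n) (scal c x)) (scal (of_nat n) (scal c y)) =
        integral\<^sup>L M (\<lambda>u. (\<lambda>w. d (scal w (scal t x)) (scal w (scal t y))) (u * u0))"
        unfolding D0_def d0_def by (simp only: mf(5)[symmetric] uu)
      also have "\<dots> = integral\<^sup>L M (\<lambda>w. d (scal w (scal t x)) (scal w (scal t y)))"
        by (rule invint[OF u0U meas])
      also have "\<dots> = H (real n * r)" unfolding H_def D0_def d0_def t_def ..
      finally show ?thesis .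
    qed
    have lim1: "LIM n sequentially. real n * r :> at_top"
      using filterlim_tendsto_pos_mult_at_top[OF tendsto_const r filterlim_real_sequentially]
      by (simp add: mult.commute)
    have "(\<lambda>n. H (real n * r) / (real n * r)) \<longlonglongrightarrow> asym scal D0 x y"
      using filterlim_compose[OF gD0[of x y] lim1] unfolding H_def by (simp add: o_def)
    then have "(\<lambda>n. r * (H (real n * r) / (real n * r))) \<longlonglongrightarrow> r * asym scal D0 x y"
      by (intro tendsto_mult tendsto_const)
    moreover have "r * (H (real n * r) / (real n * r)) = H (real n * r) / real n" for n
      using r by (cases "n = 0") (auto simp: field_simps)
    ultimately have "(\<lambda>n. D0 (scal (of_nat n) (scal c x)) (scal (of_nat n) (scal c y)) / real n) \<longlonglongrightarrow> r * asym scal D0 x y"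
      by (simp add: eq)
    then show ?thesis unfolding r_def by (subst asym_def) (rule limI)
  qed
  have s1: "asym scal d x y = asym scal d y x" for x y by (rule symg) (rule dcom)
  have s2: "asym scal D0 x y = asym scal D0 y x" for x y by (rule symg) (rule D0com)
  have t1: "asym scal d x z \<le> asym scal d x y + asym scal d y z" for x y z
    by (rule trig[OF gd dtri])
  have t2: "asym scal D0 x z \<le> asym scal D0 x y + asym scal D0 y z" for x y z
    by (rule trig[OF gD0 D0tri])
  show ?thesis
    unfolding D0_def[symmetric]
    by (intro conjI allI) (rule s1, rule t1, rule s2, rule t2, rule hom)
qed

end
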